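(* Let $\gamma>0$, $s\in(0,1)$, $H(u;\gamma)=\frac{\gamma}{1+u}\{1+\log(1+u)\}^{-1-\gamma}$ for $u>0$, and for $z\in\mathbb{R}$ let $f_0(z)=\phi(z;0,1)$, $f_1(z)=\int_0^\infty\phi(z;0,u)H(u;\gamma)\,du$, $f(z)=(1-s)f_0(z)+sf_1(z)$, where $\phi(\cdot;0,u)$ is the $N(0,u)$ density. Then: (i) for all $z\in\mathbb{R}$, $0<f_0(z)=f_0(|z|)\le f_0(0)<\infty$, $0<f_1(z)=f_1(|z|)\le f_1(0)<\infty$, and $0<f(z)=f(|z|)\le f(0)<\infty$; (ii) $f_0(r)$, $f_1(r)$, $f(r)$ are continuous and nonincreasing functions of $r\ge0$; (iii) $\lim_{|z|\to\infty}f_0(z)/f_1(z)=0$ and $\sup_{z\in\mathbb{R}}f_0(z)/f_1(z)<\infty$; (iv) there exists $C_1>0$ such that $f_1(z)\le\frac{C_1}{|z|}\{1+\log(1+|z|^2)\}^{-1-\gamma}$ for all $z\ne0$; (v) there exists $C_2>0$ such that $f_1(z)\ge\frac{C_2}{|z|}\{1+\log(1+|z|^2)\}^{-1-\gamma}$ for all $z\in\mathbb{R}\setminus(-1,1)$; (vi) there exists $C_3>0$ such that $f_1(z)\le\frac{C_3}{1+|z|}$ for all $z\in\mathbb{R}$; (vii) there exists $C_4>0$ such that for all $\tilde y,\tilde\mu\in\mathbb{R}$ and all $\sigma\in(0,\infty)$, $$|\tilde y|\,f_1\Big(\frac{\tilde y-\tilde\mu}{\sigma}\Big)\le|\tilde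 y|\,f_1\Big(\frac{|\tilde y|-|\tilde\mu|}{\sigma}\Big)\le C_4(\sigma+|\tilde\mu|).$$ *)

theory Defs
  imports "HOL-Probability.Probability"
begin

definition Hmix :: "real \<Rightarrow> real \<Rightarrow> real" where
  "Hmix \<gamma> u = \<gamma> / (1 + u) * (1 + ln (1 + u)) powr (-1 - \<gamma>)"

text \<open>phi(z;0,u) is the N(0,u) density (variance u, so standard deviation sqrt u).\<close>
definition f0 :: "real \<Rightarrow> real" where
  "f0 z = normal_density 0 1 z"

definition f1 :: "real \<Rightarrow> real \<Rightarrow> real" where
  "f1 \<gamma> z = (LBINT u:{0<..}. normal_density 0 (sqrt u) z * Hmix \<gamma> u)"

definition fmix :: "real \<Rightarrow> real \<Rightarrow> real \<Rightarrow> real" where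
  "fmix \<gamma> s z = (1 - s) * f0 z + s * f1 \<gamma> z"

end

theory Submission
  imports Defs "HOL-Real_Asymp.Real_Asymp"
begin

definition Kf :: "real \<Rightarrow> real \<Rightarrow> real" where
  "Kf a u = 1 / (sqrt u * (u + a))"

lemma K_int:
  assumes a: "a > 0"
  shows "set_integrable lborel {0<..} (Kf a)" "(LBINT u:{0<..}. Kf a u) = pi / sqrt a"
proof -
  define F where "F u = 2 / sqrt a * arctan (sqrt u / sqrt a)" for u
  have D: "DERIV F x :> Kf a x" if "0 < x" for x
    unfolding F_def Kf_def using that a
    apply (auto intro!: derivative_eq_intros)
    apply (simp add: field_simps power_divide)
    apply (subgoal_tac "a * (a * (a * sqrt x)) + a * (a * (x * sqrt x)) = (a*a) * (a * sqrt x + x * sqrt x)")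
     apply simp
    apply (simp add: algebra_simps)
    done
  have C: "isCont (Kf a) x" if "0 < x" for x
    unfolding Kf_def using that a by (auto intro!: continuous_intros)
  have L0: "(F \<longlongrightarrow> 0) (at_right 0)"
    unfolding F_def using a by real_asymp
  have L1: "(F \<longlongrightarrow> pi / sqrt a) at_top"
    unfolding F_def using a by real_asymp (simp add: sqrt_def)
  note R = interval_integral_FTC_nonneg[of 0 "\<infinity>" F "Kf a" 0 "pi / sqrt a"]
  have "set_integrable lborel (einterval 0 \<infinity>) (Kf a) \<and> (LBINT x=0..\<infinity>. Kf a x) = pi / sqrt a - 0"
    apply (rule conjI; rule R)
    using D C L0 L1 a by (auto simp: zero_ereal_def ereal_tendsto_simps Kf_def intro!: AE_I2)
  then show "set_integrable lborel {0<..} (Kf a)" "(LBINT u:{0<..}. Kf a u) = pi / sqrt a"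
    by (auto simp: zero_ereal_def einterval_eq_Ici interval_integral_to_infinity_eq)
qed

definition gg :: "real \<Rightarrow> real \<Rightarrow> real \<Rightarrow> real" where
  "gg \<gamma> z u = normal_density 0 (sqrt u) z * Hmix \<gamma> u"

lemma f1_gg: "f1 \<gamma> z = (LBINT u:{0<..}. gg \<gamma> z u)"
  unfolding f1_def gg_def by simp

lemma gg_eq: "u > 0 \<Longrightarrow> gg \<gamma> z u = exp (-(z^2) / (2*u)) / sqrt (2*pi*u) * Hmix \<gamma> u"
  unfolding gg_def normal_density_def by simp

lemma gg_abs: "gg \<gamma> \<bar>z\<bar> u = gg \<gamma> z u"
  unfolding gg_def normal_density_def by simp

lemma H_pos: "\<gamma> > 0 \<Longrightarrow> (u::real) \<ge> 0 \<Longrightarrow> 0 < Hmix \<gamma> u"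
proof -
  assume a: "\<gamma> > 0" "u \<ge> 0"
  have "0 \<le> ln (1 + u)" using a by (intro ln_ge_zero) simp
  then have "0 < 1 + ln (1 + u)" by linarith
  then show ?thesis unfolding Hmix_def using a by (auto intro!: mult_pos_pos)
qed

lemma P_le1: "\<gamma> > 0 \<Longrightarrow> (u::real) \<ge> 0 \<Longrightarrow> (1 + ln (1 + u)) powr (-1 - \<gamma>) \<le> 1"
proof -
  assume a: "\<gamma> > 0" "u \<ge> 0"
  have "0 \<le> ln (1 + u)" using a by (intro ln_ge_zero) simp
  then have "1 \<le> 1 + ln (1 + u)" by linarith
  then have "(1 + ln (1 + u)) powr (-1 - \<gamma>) \<le> 1 powr (-1 - \<gamma>)"
    using a by (intro powr_mono2') auto
  then show ?thesis by simp
qed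

lemma H_le: "\<gamma> > 0 \<Longrightarrow> (u::real) \<ge> 0 \<Longrightarrow> Hmix \<gamma> u \<le> \<gamma> / (1 + u)"
proof -
  assume a: "\<gamma> > 0" "u \<ge> 0"
  have "Hmix \<gamma> u = \<gamma> / (1 + u) * (1 + ln (1 + u)) powr (-1 - \<gamma>)" by (simp add: Hmix_def)
  also have "\<dots> \<le> \<gamma> / (1 + u) * 1"
    using a P_le1[OF a] by (intro mult_left_mono) auto
  finally show ?thesis by simp
qed

lemma gg_pos: "\<gamma> > 0 \<Longrightarrow> (u::real) > 0 \<Longrightarrow> 0 < gg \<gamma> z u"
  using H_pos[of \<gamma> u] by (simp add: gg_eq)

lemma gg_mono: "\<gamma> > 0 \<Longrightarrow> (u::real) > 0 \<Longrightarrow> \<bar>z1\<bar> \<le> \<bar>z2\<bar> \<Longrightarrow> gg \<gamma> z2 u \<le> gg \<gamma> z1 u"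
proof -
  assume a: "\<gamma> > 0" "u > 0" "\<bar>z1\<bar> \<le> \<bar>z2\<bar>"
  have "z1^2 \<le> z2^2" using a(3) by (metis abs_le_square_iff)
  then have "exp (-(z2^2) / (2*u)) \<le> exp (-(z1^2) / (2*u))"
    using a by (auto simp: divide_right_mono)
  then show ?thesis using a H_pos[of \<gamma> u]
    by (simp add: gg_eq divide_right_mono mult_right_mono)
qed

lemma gg_dom: "\<gamma> > 0 \<Longrightarrow> (u::real) > 0 \<Longrightarrow> gg \<gamma> z u \<le> \<gamma> / sqrt (2*pi) * Kf 1 u"
proof -
  assume a: "\<gamma> > 0" "u > 0"
  have "gg \<gamma> z u \<le> gg \<gamma> 0 u" using gg_mono[OF a] by simp
  also have "\<dots> = 1 / sqrt (2*pi*u) * Hmix \<gamma> u" using a by (simp add: gg_eq)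
  also have "\<dots> \<le> 1 / sqrt (2*pi*u) * (\<gamma> / (1 + u))"
    using H_le[of \<gamma> u] a by (intro mult_left_mono) auto
  also have "\<dots> = \<gamma> / sqrt (2*pi) * Kf 1 u"
    using a by (simp add: Kf_def real_sqrt_mult field_simps)
  finally show ?thesis .
qed

lemma gg_meas: "gg \<gamma> z \<in> borel_measurable lborel"
  unfolding gg_def normal_density_def Hmix_def by measurable

lemma gg_int: "\<gamma> > 0 \<Longrightarrow> set_integrable lborel {0<..} (gg \<gamma> z)"
proof -
  assume a: "\<gamma> > 0"
  have "set_integrable lborel {0<..} (\<lambda>u. \<gamma> / sqrt (2*pi) * Kf 1 u)"
    using K_int(1)[of 1] by simp
  then show ?thesis
  proof (rule set_integrable_bound)
    show "set_borel_measurable lborel {0<..} (gg \<gamma> z)"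
      unfolding set_borel_measurable_def using gg_meas by measurable
    show "AE x in lborel. x \<in> {0<..} \<longrightarrow> norm (gg \<gamma> z x) \<le> norm (\<gamma> / sqrt (2 * pi) * Kf 1 x)"
    proof (intro AE_I2 impI)
      fix x :: real assume "x \<in> {0<..}"
      then have x: "x > 0" by simp
      have "norm (gg \<gamma> z x) = gg \<gamma> z x" using abs_of_pos[OF gg_pos[OF a x]] by simp
      also have "\<dots> \<le> \<gamma> / sqrt (2 * pi) * Kf 1 x" using gg_dom[OF a x] .
      also have "\<dots> = norm (\<gamma> / sqrt (2 * pi) * Kf 1 x)" using a x by (simp add: Kf_def)
      finally show "norm (gg \<gamma> z x) \<le> norm (\<gamma> / sqrt (2 * pi) * Kf 1 x)" .
    qed
  qed
qed

lemma f1_abs: "f1 \<gamma> \<bar>z\<bar> = f1 \<gamma> z"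
  unfolding f1_gg gg_abs ..

lemma f1_mono: "\<gamma> > 0 \<Longrightarrow> \<bar>z1\<bar> \<le> \<bar>z2\<bar> \<Longrightarrow> f1 \<gamma> z2 \<le> f1 \<gamma> z1"
  unfolding f1_gg by (intro set_integral_mono gg_int gg_mono) auto

lemma f1_cont: assumes g: "\<gamma> > 0" shows "continuous_on UNIV (f1 \<gamma>)"
proof -
  have "isCont (f1 \<gamma>) a" for a
  proof (rule continuous_at_sequentiallyI)
    fix X :: "nat \<Rightarrow> real" assume X: "X \<longlonglongrightarrow> a"
    let ?s = "\<lambda>n u. indicator {0<..} u *\<^sub>R gg \<gamma> (X n) u"
    let ?w = "\<lambda>u. indicator {0<..} u *\<^sub>R (\<gamma> / sqrt (2*pi) * Kf 1 u)"
    have "(\<lambda>n. integral\<^sup>L lborel (?s n)) \<longlonglongrightarrow> integral\<^sup>L lborel (\<lambda>u. indicator {0<..} u *\<^sub>R gg \<gamma> a u)"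
    proof (rule integral_dominated_convergence[where w = ?w])
      show "(\<lambda>u. indicator {0<..} u *\<^sub>R gg \<gamma> a u) \<in> borel_measurable lborel"
        using gg_meas by measurable
      show "?s n \<in> borel_measurable lborel" for n
        using gg_meas by measurable
      show "integrable lborel ?w"
      proof -
        have "set_integrable lborel {0<..} (\<lambda>u. \<gamma> / sqrt (2*pi) * Kf 1 u)"
          using K_int(1)[of 1] by simp
        then show ?thesis by (simp add: set_integrable_def)
      qed
      show "AE x in lborel. (\<lambda>n. ?s n x) \<longlonglongrightarrow> indicator {0<..} x *\<^sub>R gg \<gamma> a x"
      proof (intro AE_I2)
        fix u :: real
        show "(\<lambda>n. ?s n u) \<longlonglongrightarrow> indicator {0<..} u *\<^sub>R gg \<gamma> a u"
        proof (cases "u > 0")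
          case True
          have "(\<lambda>n. exp (-((X n)^2) / (2*u)) / sqrt (2*pi*u) * Hmix \<gamma> u) \<longlonglongrightarrow> exp (-(a^2) / (2*u)) / sqrt (2*pi*u) * Hmix \<gamma> u"
            using True by (intro tendsto_intros X) auto
          then show ?thesis using True by (simp add: gg_eq)
        qed simp
      qed
      show "AE x in lborel. norm (?s n x) \<le> ?w x" for n
      proof (intro AE_I2)
        fix x :: real
        show "norm (?s n x) \<le> ?w x"
        proof (cases "x > 0")
          case True
          then show ?thesis using abs_of_pos[OF gg_pos[OF g True]] gg_dom[OF g True] by simp
        qed simp
      qed
    qed
    then show "(\<lambda>n. f1 \<gamma> (X n)) \<longlonglongrightarrow> f1 \<gamma> a"
      by (simp add: f1_gg set_lebesgue_integral_def)
  qed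
  then show ?thesis by (simp add: continuous_on_eq_continuous_at)
qed

lemma box_integral:
  fixes a b c :: real assumes "0 < a" "a \<le> b"
  shows "set_integrable lborel {0<..} (\<lambda>u. indicator {a..b} u *\<^sub>R c)"
        "(LBINT u:{0<..}. indicator {a..b} u *\<^sub>R c) = (b - a) * c"
proof -
  have e: "(\<lambda>u. indicator {0<..} u *\<^sub>R (indicator {a..b} u *\<^sub>R c)) = (\<lambda>u. indicator {a..b} u *\<^sub>R c)"
    using assms by (auto simp: fun_eq_iff split: split_indicator)
  show "set_integrable lborel {0<..} (\<lambda>u. indicator {a..b} u *\<^sub>R c)"
    unfolding set_integrable_def e using assms by (intro integrable_indicator) (auto simp: emeasure_lborel_Icc)
  have "(LBINT u:{0<..}. indicator {a..b} u *\<^sub>R c) = integral\<^sup>L lborel (\<lambda>u. indicator {a..b} u *\<^sub>R c)"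
    unfolding set_lebesgue_integral_def e ..
  also have "\<dots> = (b - a) * c"
    using assms by (simp add: emeasure_lborel_Icc measure_def)
  finally show "(LBINT u:{0<..}. indicator {a..b} u *\<^sub>R c) = (b - a) * c" .
qed

lemma ln_2x: "0 \<le> (x::real) \<Longrightarrow> 1 + ln (1 + 2 * x) \<le> 2 * (1 + ln (1 + x))"
proof -
  assume x: "0 \<le> x"
  have "ln (1 + 2 * x) \<le> ln (2 * (1 + x))" using x by simp
  also have "\<dots> = ln 2 + ln (1 + x)" using x ln_mult[of 2 "1+x"] by simp
  also have "\<dots> \<le> 1 + ln (1 + x)" using ln_2_less_1 by simp
  finally have "ln (1 + 2 * x) \<le> 1 + ln (1 + x)" .
  moreover have "0 \<le> ln (1 + x)" using x by simp
  ultimately show ?thesis by (simp add: algebra_simps)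
qed

lemma f1_lower_pt:
  assumes g: "\<gamma> > 0" and z: "\<bar>z\<bar> \<ge> 1"
  shows "exp (-1/2) / sqrt (4*pi) * \<gamma> / 3 * 2 powr (-1-\<gamma>) / \<bar>z\<bar> * (1 + ln (1 + \<bar>z\<bar>^2)) powr (-1 - \<gamma>) \<le> f1 \<gamma> z"
proof -
  define a where "a = z^2"
  define b where "b = 2 * z^2"
  have a1: "a \<ge> 1" using z unfolding a_def by (metis abs_le_square_iff abs_one one_power2)
  have ab: "a \<le> b" "0 < a" using a1 unfolding a_def b_def by auto
  define Pb where "Pb = (1 + ln (1 + b)) powr (-1 - \<gamma>)"
  define c where "c = exp (-1/2) * (1 / sqrt (2*pi*b)) * (\<gamma> / (1 + b) * Pb)"
  have "0 \<le> ln (1 + b)" using ab by (intro ln_ge_zero) simp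
  then have Pb_pos: "0 < Pb" unfolding Pb_def by simp
  have ptw: "indicator {a..b} u *\<^sub>R c \<le> gg \<gamma> z u" if u: "u \<in> {0<..}" for u
  proof (cases "u \<in> {a..b}")
    case True
    then have u1: "a \<le> u" "u \<le> b" by auto
    have upos: "0 < u" using u1 ab by auto
    have e1: "exp (-1/2) \<le> exp (-(z^2) / (2*u))"
      using u1 upos unfolding a_def by (auto simp: field_simps)
    have e2: "1 / sqrt (2*pi*b) \<le> 1 / sqrt (2*pi*u)"
      using u1 upos by (auto intro!: divide_left_mono mult_pos_pos)
    have "0 \<le> ln (1 + u)" using upos by (intro ln_ge_zero) simp
    then have "0 < 1 + ln (1 + u)" by linarith
    then have e3: "Pb \<le> (1 + ln (1 + u)) powr (-1 - \<gamma>)"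
      unfolding Pb_def using u1 upos g
      by (intro powr_mono2') auto
    have e4: "\<gamma> / (1 + b) \<le> \<gamma> / (1 + u)"
      using u1 upos g by (intro divide_left_mono) auto
    have e5: "\<gamma> / (1 + b) * Pb \<le> Hmix \<gamma> u"
      unfolding Hmix_def using e3 e4 Pb_pos g ab upos
      by (intro mult_mono) auto
    have "c \<le> exp (-(z^2) / (2*u)) * (1 / sqrt (2*pi*u)) * Hmix \<gamma> u"
      unfolding c_def using e1 e2 e5 Pb_pos g ab upos
      by (intro mult_mono) (auto intro!: mult_nonneg_nonneg)
    then show ?thesis using True upos by (simp add: gg_eq)
  next
    case False
    then show ?thesis using gg_pos[OF g, of u z] u by simp
  qed
  have "(b - a) * c \<le> f1 \<gamma> z"
    unfolding f1_gg box_integral(2)[OF ab(2) ab(1), symmetric]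
    by (intro set_integral_mono box_integral ab gg_int g ptw)
  moreover have "(b - a) * c \<ge> exp (-1/2) / sqrt (4*pi) * \<gamma> / 3 * 2 powr (-1-\<gamma>) / \<bar>z\<bar> * (1 + ln (1 + \<bar>z\<bar>^2)) powr (-1 - \<gamma>)"
  proof -
    define t where "t = \<bar>z\<bar>"
    have t1: "t \<ge> 1" using z t_def by simp
    have zt: "z^2 = t^2" unfolding t_def by simp
    define Lz where "Lz = 1 + ln (1 + t^2)"
    have "0 \<le> ln (1 + t^2)" by (intro ln_ge_zero) simp
    then have Lz1: "Lz \<ge> 1" unfolding Lz_def by linarith
    have s1: "sqrt (2*pi*b) = sqrt (4*pi) * t"
      unfolding b_def zt using t1 by (simp add: real_sqrt_mult)
    have "1 + ln (1 + b) \<le> 2 * Lz" unfolding b_def Lz_def zt by (intro ln_2x) simp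
    moreover have "0 \<le> ln (1 + b)" using ab by (intro ln_ge_zero) simp
    ultimately have "(2 * Lz) powr (-1-\<gamma>) \<le> Pb"
      unfolding Pb_def using g by (intro powr_mono2') auto
    then have s2: "2 powr (-1-\<gamma>) * Lz powr (-1-\<gamma>) \<le> Pb" by (simp add: powr_mult)
    have ba: "b - a = t^2" unfolding a_def b_def zt by simp
    have eq: "(b-a)*c = exp(-1/2) * \<gamma> * Pb * (t^2 / (sqrt(4*pi) * t * (1+2*t^2)))"
      unfolding c_def ba s1 unfolding b_def zt by (simp add: field_simps)
    have s3: "1 / (3 * sqrt(4*pi) * t) \<le> t^2 / (sqrt(4*pi) * t * (1+2*t^2))"
    proof -
      have tt: "1 \<le> t * t" using t1 mult_mono[of 1 t 1 t] by simp
      have "0 < sqrt (4 * pi) * (1 + 2 * (t * t))" using tt by (intro mult_pos_pos) auto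
      then show ?thesis using t1 tt by (simp add: divide_simps power2_eq_square)
    qed
    have "exp(-1/2) * \<gamma> * (2 powr (-1-\<gamma>) * Lz powr (-1-\<gamma>)) * (1 / (3 * sqrt(4*pi) * t))
          \<le> exp(-1/2) * \<gamma> * Pb * (t^2 / (sqrt(4*pi) * t * (1+2*t^2)))"
      using s2 s3 g t1 Pb_pos by (intro mult_mono) auto
    then show ?thesis unfolding eq t_def[symmetric] Lz_def[symmetric] by (simp add: field_simps)
  qed
  ultimately show ?thesis by linarith
qed

lemma exp_log_bound:
  assumes g: "\<gamma> > 0"
  shows "\<exists>M>0. \<forall>z::real. exp (-\<bar>z\<bar>/4) \<le> M * (1 + ln (1 + \<bar>z\<bar>^2)) powr (-1 - \<gamma>)"
proof -
  define h where "h t = exp (-t/4) * (1 + ln (1 + t^2)) powr (1 + \<gamma>)" for t :: real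
  have "(h \<longlongrightarrow> 0) at_top" unfolding h_def using g by real_asymp
  then have "eventually (\<lambda>t. h t < 1) at_top" by (rule order_tendstoD) simp
  then obtain X where X: "\<And>t. t \<ge> X \<Longrightarrow> h t < 1" by (auto simp: eventually_at_top_linorder)
  define M where "M = max 1 ((1 + ln (1 + X^2)) powr (1 + \<gamma>))"
  have M1: "M \<ge> 1" unfolding M_def by simp
  have "exp (-\<bar>z\<bar>/4) \<le> M * (1 + ln (1 + \<bar>z\<bar>^2)) powr (-1 - \<gamma>)" for z :: real
  proof -
    define t where "t = \<bar>z\<bar>"
    have t0: "t \<ge> 0" unfolding t_def by simp
    define L where "L = 1 + ln (1 + t^2)"
    have "0 \<le> ln (1 + t^2)" by (intro ln_ge_zero) simp
    then have L1: "L \<ge> 1" unfolding L_def by linarith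
    have inv: "L powr (1 + \<gamma>) * L powr (-1 - \<gamma>) = 1"
      using L1 by (simp add: powr_add[symmetric])
    have ht: "h t \<le> M"
    proof (cases "t \<ge> X")
      case True then show ?thesis using X[of t] M1 by simp
    next
      case False
      have "h t \<le> 1 * (1 + ln (1 + t^2)) powr (1 + \<gamma>)"
        unfolding h_def using t0 by (intro mult_right_mono) auto
      also have "\<dots> \<le> (1 + ln (1 + X^2)) powr (1 + \<gamma>)"
      proof -
        have "t^2 \<le> X^2" using False t0 by (intro power_mono) auto
        then have "1 + ln (1 + t^2) \<le> 1 + ln (1 + X^2)" by (subst add_le_cancel_left, subst ln_le_cancel_iff) (auto intro: add_pos_nonneg)
        then show ?thesis using powr_mono2[of "1+\<gamma>" "1 + ln(1+t^2)" "1 + ln(1+X^2)"] L1 g unfolding L_def by simp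
      qed
      also have "\<dots> \<le> M" unfolding M_def by simp
      finally show ?thesis .
    qed
    have "exp (-t/4) = h t * L powr (-1 - \<gamma>)"
      unfolding h_def L_def[symmetric] using inv by (simp add: mult.assoc)
    also have "\<dots> \<le> M * L powr (-1 - \<gamma>)"
      using ht by (intro mult_right_mono) auto
    finally show ?thesis unfolding t_def L_def by simp
  qed
  then show ?thesis using M1 by (intro exI[of _ M]) auto
qed

lemma gg_upper_pt:
  assumes g: "\<gamma> > 0" and M: "M > 0"
    and hM: "\<forall>z::real. exp (-\<bar>z\<bar>/4) \<le> M * (1 + ln (1 + \<bar>z\<bar>^2)) powr (-1 - \<gamma>)"
    and u: "u > 0"
  shows "gg \<gamma> z u \<le> (max (2 powr (1+\<gamma>)) M * (1 + ln (1 + \<bar>z\<bar>^2)) powr (-1 - \<gamma>)) * (\<gamma> / sqrt (2*pi) * Kf (z^2/4) u)"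
proof -
  define L where "L = 1 + ln (1 + \<bar>z\<bar>^2)"
  define M' where "M' = max (2 powr (1+\<gamma>)) M"
  define P where "P = (1 + ln (1 + u)) powr (-1 - \<gamma>)"
  define a where "a = z^2 / (4*u)"
  define E where "E = exp (-a)"
  have a0: "a \<ge> 0" unfolding a_def using u by simp
  have "0 \<le> ln (1 + \<bar>z\<bar>^2)" by (intro ln_ge_zero) simp
  then have L1: "L \<ge> 1" unfolding L_def by linarith
  have "0 \<le> ln (1 + u)" using u by (intro ln_ge_zero) simp
  then have Lu: "1 + ln (1 + u) \<ge> 1" by linarith
  have P0: "P > 0" unfolding P_def using Lu by simp
  have P1: "P \<le> 1" unfolding P_def using P_le1[OF g, of u] u by simp
  have E0: "E > 0" unfolding E_def by simp
  have Le0: "L powr (-1-\<gamma>) > 0" using L1 by simp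
  have gg_split: "gg \<gamma> z u = (E * P) * (E / sqrt (2*pi*u) * (\<gamma> / (1 + u)))"
  proof -
    have "exp (-(z^2) / (2*u)) = E * E"
      unfolding E_def a_def by (simp add: exp_add[symmetric])
    then show ?thesis using u by (simp add: gg_eq Hmix_def P_def field_simps)
  qed
  have c1: "E * P \<le> M' * L powr (-1-\<gamma>)"
  proof (cases "\<bar>z\<bar> \<le> u")
    case True
    have "1 + \<bar>z\<bar>^2 \<le> (1 + \<bar>z\<bar>)^2" by (simp add: power2_eq_square algebra_simps)
    then have "ln (1 + \<bar>z\<bar>^2) \<le> ln ((1 + \<bar>z\<bar>)^2)" by (subst ln_le_cancel_iff) (auto intro: add_pos_nonneg)
    also have "\<dots> = 2 * ln (1 + \<bar>z\<bar>)" by (simp add: ln_realpow)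
    also have "\<dots> \<le> 2 * ln (1 + u)" using True by simp
    finally have "L / 2 \<le> 1 + ln (1 + u)" unfolding L_def using \<open>0 \<le> ln (1 + u)\<close> by (simp add: field_simps)
    then have "P \<le> (L / 2) powr (-1-\<gamma>)" unfolding P_def using L1 g by (intro powr_mono2') auto
    also have "\<dots> = 2 powr (1+\<gamma>) * L powr (-1-\<gamma>)"
    proof -
      have "2 powr (1+\<gamma>) * 2 powr (-1-\<gamma>) = 1" by (simp add: powr_add[symmetric])
      then show ?thesis using L1 by (simp add: powr_divide field_simps)
    qed
    also have "\<dots> \<le> M' * L powr (-1-\<gamma>)" unfolding M'_def using Le0 by (intro mult_right_mono) auto
    finally have "P \<le> M' * L powr (-1-\<gamma>)" .
    moreover have "E \<le> 1" unfolding E_def using a0 by simp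
    ultimately show ?thesis using P0 E0 by (metis mult_left_le_one_le less_imp_le order_trans mult.commute)
  next
    case False
    have "\<bar>z\<bar>/4 \<le> a"
    proof -
      have "\<bar>z\<bar> * u \<le> \<bar>z\<bar> * \<bar>z\<bar>" using False by (intro mult_left_mono) auto
      then have "\<bar>z\<bar> * u \<le> z^2" by (simp add: power2_eq_square)
      then show ?thesis unfolding a_def using u by (simp add: field_simps)
    qed
    then have "E \<le> exp (-\<bar>z\<bar>/4)" unfolding E_def by simp
    also have "\<dots> \<le> M * L powr (-1-\<gamma>)" using hM unfolding L_def by blast
    also have "\<dots> \<le> M' * L powr (-1-\<gamma>)" unfolding M'_def using Le0 by (intro mult_right_mono) auto
    finally have "E \<le> M' * L powr (-1-\<gamma>)" .
    then show ?thesis using P0 P1 E0 by (metis mult_right_le_one_le less_imp_le order_trans)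
  qed
  have c2: "E / sqrt (2*pi*u) * (\<gamma> / (1 + u)) \<le> \<gamma> / sqrt (2*pi) * Kf (z^2/4) u"
  proof -
    have "1 + a \<le> exp a" by simp
    then have E1: "E \<le> 1 / (1 + a)" unfolding E_def using a0 by (simp add: exp_minus field_simps)
    have "u + z^2/4 \<le> (1 + a) * (1 + u)" unfolding a_def using u a0 by (simp add: field_simps)
    moreover have "0 < u + z^2/4" using u by (simp add: add_pos_nonneg)
    ultimately have "1 / ((1 + a) * (1 + u)) \<le> 1 / (u + z^2/4)"
      by (intro divide_left_mono) auto
    moreover have "E / (1 + u) \<le> (1 / (1 + a)) / (1 + u)"
      using E1 u by (intro divide_right_mono) auto
    ultimately have "E / (1 + u) \<le> 1 / (u + z^2/4)" by simp
    then have le: "E / (1 + u) * (\<gamma> / sqrt (2*pi) / sqrt u) \<le> 1 / (u + z^2/4) * (\<gamma> / sqrt (2*pi) / sqrt u)"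
      using u g by (intro mult_right_mono) auto
    have eq1: "E / sqrt (2*pi*u) * (\<gamma> / (1 + u)) = E / (1 + u) * (\<gamma> / sqrt (2*pi) / sqrt u)"
      unfolding real_sqrt_mult[of "2*pi" u] by simp
    have eq2: "\<gamma> / sqrt (2*pi) * Kf (z^2/4) u = 1 / (u + z^2/4) * (\<gamma> / sqrt (2*pi) / sqrt u)"
      by (simp add: Kf_def)
    show ?thesis unfolding eq1 eq2 by (rule le)
  qed
  show ?thesis
    unfolding gg_split L_def[symmetric] M'_def[symmetric]
  proof (rule mult_mono[OF c1 c2])
    show "0 \<le> M' * L powr (-1-\<gamma>)" using Le0 M unfolding M'_def by simp
    show "0 \<le> E / sqrt (2*pi*u) * (\<gamma> / (1 + u))" using E0 u g by simp
  qed
qed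

lemma f1_upper:
  assumes g: "\<gamma> > 0"
  shows "\<exists>C1>0. \<forall>z::real. z \<noteq> 0 \<longrightarrow> f1 \<gamma> z \<le> C1 / \<bar>z\<bar> * (1 + ln (1 + \<bar>z\<bar>^2)) powr (-1 - \<gamma>)"
proof -
  obtain M where M: "M > 0" and hM: "\<forall>z::real. exp (-\<bar>z\<bar>/4) \<le> M * (1 + ln (1 + \<bar>z\<bar>^2)) powr (-1 - \<gamma>)"
    using exp_log_bound[OF g] by blast
  define M' where "M' = max (2 powr (1+\<gamma>)) M"
  have M'0: "M' > 0" unfolding M'_def using M by simp
  define C1 where "C1 = M' * (\<gamma> / sqrt (2*pi)) * (2 * pi)"
  have C10: "C1 > 0" unfolding C1_def using M'0 g by simp
  have "f1 \<gamma> z \<le> C1 / \<bar>z\<bar> * (1 + ln (1 + \<bar>z\<bar>^2)) powr (-1 - \<gamma>)" if z: "z \<noteq> 0" for z :: real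
  proof -
    define A where "A = M' * (1 + ln (1 + \<bar>z\<bar>^2)) powr (-1 - \<gamma>)"
    have a0: "z^2/4 > 0" using z by simp
    have Kint: "set_integrable lborel {0<..} (\<lambda>u. A * (\<gamma> / sqrt (2*pi) * Kf (z^2/4) u))"
      using K_int(1)[OF a0] by simp
    have "f1 \<gamma> z \<le> (LBINT u:{0<..}. A * (\<gamma> / sqrt (2*pi) * Kf (z^2/4) u))"
      unfolding f1_gg A_def M'_def
      by (intro set_integral_mono gg_int g Kint[unfolded A_def M'_def] gg_upper_pt[OF g M hM]) auto
    also have "\<dots> = A * (\<gamma> / sqrt (2*pi) * (pi / sqrt (z^2/4)))"
      using K_int(2)[OF a0] by simp
    also have "sqrt (z^2/4) = \<bar>z\<bar> / 2" by (simp add: real_sqrt_divide)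
    also have "A * (\<gamma> / sqrt (2*pi) * (pi / (\<bar>z\<bar> / 2))) = C1 / \<bar>z\<bar> * (1 + ln (1 + \<bar>z\<bar>^2)) powr (-1 - \<gamma>)"
      unfolding A_def C1_def by (simp add: field_simps)
    finally show ?thesis .
  qed
  then show ?thesis using C10 by blast
qed

lemma f0_eq: "f0 z = exp (-(z^2)/2) / sqrt (2*pi)"
  unfolding f0_def normal_density_def by simp

lemma f0_pos: "0 < f0 z" by (simp add: f0_eq)
lemma f0_abs: "f0 \<bar>z\<bar> = f0 z" by (simp add: f0_eq)
lemma f0_mono: "\<bar>z1\<bar> \<le> \<bar>z2\<bar> \<Longrightarrow> f0 z2 \<le> f0 z1"
proof -
  assume "\<bar>z1\<bar> \<le> \<bar>z2\<bar>"
  then have "z1^2 \<le> z2^2" by (metis abs_le_square_iff)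
  then show ?thesis by (simp add: f0_eq divide_right_mono)
qed
lemma f0_cont: "continuous_on UNIV f0"
  unfolding f0_eq[abs_def] by (intro continuous_intros) auto

lemma f1_lower:
  assumes g: "\<gamma> > 0"
  shows "\<exists>C2>0. \<forall>z::real. \<bar>z\<bar> \<ge> 1 \<longrightarrow> f1 \<gamma> z \<ge> C2 / \<bar>z\<bar> * (1 + ln (1 + \<bar>z\<bar>^2)) powr (-1 - \<gamma>)"
  using f1_lower_pt[OF g] g by (intro exI[of _ "exp (-1/2) / sqrt (4*pi) * \<gamma> / 3 * 2 powr (-1-\<gamma>)"]) auto

lemma f1_pos:
  assumes g: "\<gamma> > 0" shows "0 < f1 \<gamma> z"
proof -
  obtain C2 where C2: "C2 > 0" "\<And>z::real. \<bar>z\<bar> \<ge> 1 \<Longrightarrow> f1 \<gamma> z \<ge> C2 / \<bar>z\<bar> * (1 + ln (1 + \<bar>z\<bar>^2)) powr (-1 - \<gamma>)"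
    using f1_lower[OF g] by blast
  have pos: "0 < f1 \<gamma> w" if w: "\<bar>w\<bar> \<ge> 1" for w :: real
  proof -
    have "0 \<le> ln (1 + \<bar>w\<bar>^2)" by (intro ln_ge_zero) simp
    then have "0 < 1 + ln (1 + \<bar>w\<bar>^2)" by linarith
    then have "0 < C2 / \<bar>w\<bar> * (1 + ln (1 + \<bar>w\<bar>^2)) powr (-1 - \<gamma>)" using C2(1) w by simp
    then show ?thesis using C2(2)[OF w] by linarith
  qed
  show ?thesis
  proof (cases "\<bar>z\<bar> \<ge> 1")
    case True then show ?thesis using pos by blast
  next
    case False
    then have "f1 \<gamma> 1 \<le> f1 \<gamma> z" by (intro f1_mono g) auto
    then show ?thesis using pos[of 1] by simp
  qed
qed

lemma ratio_lim:
  assumes g: "\<gamma> > 0"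
  shows "((\<lambda>z::real. f0 z / f1 \<gamma> z) \<longlongrightarrow> 0) at_infinity"
proof -
  obtain C2 where C2: "C2 > 0" "\<And>z::real. \<bar>z\<bar> \<ge> 1 \<Longrightarrow> f1 \<gamma> z \<ge> C2 / \<bar>z\<bar> * (1 + ln (1 + \<bar>z\<bar>^2)) powr (-1 - \<gamma>)"
    using f1_lower[OF g] by blast
  define h where "h t = t * (1 + ln (1 + t^2)) powr (1 + \<gamma>) * exp (-(t^2)/2) / (sqrt (2*pi) * C2)" for t :: real
  have "((\<lambda>t::real. t * (1 + ln (1 + t^2)) powr (1 + \<gamma>) * exp (-(t^2)/2)) \<longlongrightarrow> 0) at_top"
    using g by real_asymp
  then have "(h \<longlongrightarrow> 0) at_top" unfolding h_def by (rule tendsto_divide_zero)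
  moreover have "filterlim (\<lambda>z::real. \<bar>z\<bar>) at_top at_infinity"
  proof -
    have "norm = (abs :: real \<Rightarrow> real)" by (rule ext) simp
    then show ?thesis using filterlim_at_infinity_imp_norm_at_top[OF filterlim_ident[where F="at_infinity :: real filter"]] by simp
  qed
  ultimately have hl: "((\<lambda>z::real. h \<bar>z\<bar>) \<longlongrightarrow> 0) at_infinity"
    by (rule filterlim_compose)
  have bnd: "f0 z / f1 \<gamma> z \<le> h \<bar>z\<bar>" if z: "\<bar>z\<bar> \<ge> 1" for z :: real
  proof -
    define L where "L = 1 + ln (1 + \<bar>z\<bar>^2)"
    have "0 \<le> ln (1 + \<bar>z\<bar>^2)" by (intro ln_ge_zero) simp
    then have L1: "L \<ge> 1" unfolding L_def by linarith
    have lb: "C2 / \<bar>z\<bar> * L powr (-1 - \<gamma>) \<le> f1 \<gamma> z" using C2(2)[OF z] unfolding L_def .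
    have lbpos: "0 < C2 / \<bar>z\<bar> * L powr (-1 - \<gamma>)" using C2(1) z L1 by simp
    have "f0 z / f1 \<gamma> z \<le> f0 z / (C2 / \<bar>z\<bar> * L powr (-1 - \<gamma>))"
      using f0_pos[of z] mult_pos_pos[OF f1_pos[OF g, of z] lbpos] by (intro divide_left_mono[OF lb]) auto
    also have "L powr (-1 - \<gamma>) = 1 / L powr (1 + \<gamma>)"
      using powr_minus_divide[of L "1+\<gamma>"] by simp
    also have "f0 z / (C2 / \<bar>z\<bar> * (1 / L powr (1 + \<gamma>))) = h \<bar>z\<bar>"
      unfolding h_def f0_eq L_def using C2(1) z by (simp add: field_simps)
    finally show ?thesis .
  qed
  show ?thesis
  proof (rule tendsto_sandwich[OF _ _ tendsto_const hl])
    show "eventually (\<lambda>z. 0 \<le> f0 z / f1 \<gamma> z) at_infinity"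
      using f0_pos f1_pos[OF g] by (intro always_eventually) (auto intro: less_imp_le)
    show "eventually (\<lambda>z. f0 z / f1 \<gamma> z \<le> h \<bar>z\<bar>) at_infinity"
      unfolding eventually_at_infinity using bnd by (intro exI[of _ 1]) auto
  qed
qed

lemma ratio_bdd:
  assumes g: "\<gamma> > 0"
  shows "bdd_above (range (\<lambda>z::real. f0 z / f1 \<gamma> z))"
proof -
  have "eventually (\<lambda>z::real. f0 z / f1 \<gamma> z < 1) at_infinity"
    using ratio_lim[OF g] by (rule order_tendstoD) simp
  then obtain R where R: "\<And>z::real. R \<le> norm z \<Longrightarrow> f0 z / f1 \<gamma> z < 1"
    unfolding eventually_at_infinity by blast
  define R' where "R' = max R 1"
  have "f0 z / f1 \<gamma> z \<le> max 1 (f0 0 / f1 \<gamma> R')" for z :: real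
  proof (cases "R' \<le> \<bar>z\<bar>")
    case True then show ?thesis using R[of z] unfolding R'_def by fastforce
  next
    case False
    then have "f1 \<gamma> R' \<le> f1 \<gamma> z" unfolding R'_def by (intro f1_mono g) auto
    moreover have "f0 z \<le> f0 0" by (intro f0_mono) simp
    ultimately have "f0 z / f1 \<gamma> z \<le> f0 0 / f1 \<gamma> R'"
      using f1_pos[OF g] f0_pos by (intro frac_le) (auto intro: less_imp_le)
    then show ?thesis by simp
  qed
  then show ?thesis by (intro bdd_aboveI2) auto
qed

lemma f1_C3:
  assumes g: "\<gamma> > 0"
  shows "\<exists>C3>0. \<forall>z::real. f1 \<gamma> z \<le> C3 / (1 + \<bar>z\<bar>)"
proof -
  obtain C1 where C1: "C1 > 0" "\<And>z::real. z \<noteq> 0 \<Longrightarrow> f1 \<gamma> z \<le> C1 / \<bar>z\<bar> * (1 + ln (1 + \<bar>z\<bar>^2)) powr (-1 - \<gamma>)"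
    using f1_upper[OF g] by blast
  define C3 where "C3 = 2 * C1 + 2 * f1 \<gamma> 0"
  have C30: "C3 > 0" unfolding C3_def using C1(1) f1_pos[OF g, of 0] by simp
  have "f1 \<gamma> z \<le> C3 / (1 + \<bar>z\<bar>)" for z :: real
  proof (cases "\<bar>z\<bar> \<ge> 1")
    case True
    then have z: "z \<noteq> 0" by auto
    have "0 \<le> ln (1 + \<bar>z\<bar>^2)" by (intro ln_ge_zero) simp
    then have "(1 + ln (1 + \<bar>z\<bar>^2)) powr (-1 - \<gamma>) \<le> 1"
      using P_le1[OF g, of "\<bar>z\<bar>^2"] by simp
    then have "f1 \<gamma> z \<le> C1 / \<bar>z\<bar> * 1"
    proof -
      have "C1 / \<bar>z\<bar> * (1 + ln (1 + \<bar>z\<bar>^2)) powr (-1 - \<gamma>) \<le> C1 / \<bar>z\<bar> * 1"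
        using C1(1) \<open>(1 + ln (1 + \<bar>z\<bar>^2)) powr (-1 - \<gamma>) \<le> 1\<close> by (intro mult_left_mono) auto
      then show ?thesis using C1(2)[OF z] by linarith
    qed
    also have "\<dots> \<le> 2 * C1 / (1 + \<bar>z\<bar>)"
      using True C1(1) by (simp add: divide_simps)
    also have "\<dots> \<le> C3 / (1 + \<bar>z\<bar>)"
      unfolding C3_def using f1_pos[OF g, of 0] by (intro divide_right_mono) auto
    finally show ?thesis .
  next
    case False
    have "f1 \<gamma> z \<le> f1 \<gamma> 0" by (intro f1_mono g) simp
    also have "\<dots> \<le> 2 * f1 \<gamma> 0 / (1 + \<bar>z\<bar>)"
    proof -
      have "f1 \<gamma> 0 * (1 + \<bar>z\<bar>) \<le> 2 * f1 \<gamma> 0"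
        using False f1_pos[OF g, of 0] by (simp add: algebra_simps)
      then show ?thesis by (subst pos_le_divide_eq) auto
    qed
    also have "\<dots> \<le> C3 / (1 + \<bar>z\<bar>)"
      unfolding C3_def using C1(1) by (intro divide_right_mono) auto
    finally show ?thesis .
  qed
  then show ?thesis using C30 by blast
qed

lemma f1_C4:
  assumes g: "\<gamma> > 0"
  shows "\<exists>C4>0. \<forall>y \<mu> \<sigma> :: real. \<sigma> > 0 \<longrightarrow>
         \<bar>y\<bar> * f1 \<gamma> ((y - \<mu>) / \<sigma>) \<le> \<bar>y\<bar> * f1 \<gamma> ((\<bar>y\<bar> - \<bar>\<mu>\<bar>) / \<sigma>)
         \<and> \<bar>y\<bar> * f1 \<gamma> ((\<bar>y\<bar> - \<bar>\<mu>\<bar>) / \<sigma>) \<le> C4 * (\<sigma> + \<bar>\<mu>\<bar>)"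
proof -
  obtain C3 where C3: "C3 > 0" "\<And>z::real. f1 \<gamma> z \<le> C3 / (1 + \<bar>z\<bar>)"
    using f1_C3[OF g] by blast
  define B0 where "B0 = f1 \<gamma> 0"
  have B0: "B0 > 0" unfolding B0_def using f1_pos[OF g] .
  define C4 where "C4 = 2 * B0 + 2 * C3"
  have C40: "C4 > 0" unfolding C4_def using B0 C3 by simp
  have main: "\<bar>y\<bar> * f1 \<gamma> ((y - \<mu>) / \<sigma>) \<le> \<bar>y\<bar> * f1 \<gamma> ((\<bar>y\<bar> - \<bar>\<mu>\<bar>) / \<sigma>)
         \<and> \<bar>y\<bar> * f1 \<gamma> ((\<bar>y\<bar> - \<bar>\<mu>\<bar>) / \<sigma>) \<le> C4 * (\<sigma> + \<bar>\<mu>\<bar>)"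
    if s: "\<sigma> > 0" for y \<mu> \<sigma> :: real
  proof
    have "\<bar>\<bar>y\<bar> - \<bar>\<mu>\<bar>\<bar> \<le> \<bar>y - \<mu>\<bar>" by (rule abs_triangle_ineq3)
    then have "\<bar>(\<bar>y\<bar> - \<bar>\<mu>\<bar>) / \<sigma>\<bar> \<le> \<bar>(y - \<mu>) / \<sigma>\<bar>"
      using s by (simp add: divide_right_mono)
    then have "f1 \<gamma> ((y - \<mu>) / \<sigma>) \<le> f1 \<gamma> ((\<bar>y\<bar> - \<bar>\<mu>\<bar>) / \<sigma>)" by (rule f1_mono[OF g])
    then show "\<bar>y\<bar> * f1 \<gamma> ((y - \<mu>) / \<sigma>) \<le> \<bar>y\<bar> * f1 \<gamma> ((\<bar>y\<bar> - \<bar>\<mu>\<bar>) / \<sigma>)"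
      by (intro mult_left_mono) auto
    define t where "t = (\<bar>y\<bar> - \<bar>\<mu>\<bar>) / \<sigma>"
    show "\<bar>y\<bar> * f1 \<gamma> t \<le> C4 * (\<sigma> + \<bar>\<mu>\<bar>)"
    proof (cases "\<bar>y\<bar> \<le> 2 * \<bar>\<mu>\<bar> + \<sigma>")
      case True
      have "f1 \<gamma> t \<le> B0" unfolding B0_def by (intro f1_mono g) simp
      then have "\<bar>y\<bar> * f1 \<gamma> t \<le> \<bar>y\<bar> * B0" by (intro mult_left_mono) auto
      also have "\<dots> \<le> (2 * \<bar>\<mu>\<bar> + \<sigma>) * B0" using True B0 by (intro mult_right_mono) auto
      also have "\<dots> \<le> C4 * (\<sigma> + \<bar>\<mu>\<bar>)" unfolding C4_def using B0 C3(1) s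
        by (simp add: algebra_simps add_nonneg_nonneg mult_nonneg_nonneg)
      finally show ?thesis .
    next
      case False
      have d: "\<bar>y\<bar> - \<bar>\<mu>\<bar> > 0" using False s by linarith
      have tpos: "t > 0" unfolding t_def using d s by simp
      have "f1 \<gamma> t \<le> C3 / (1 + \<bar>t\<bar>)" by (rule C3(2))
      also have "\<dots> \<le> C3 / t" using tpos C3(1) by (intro divide_left_mono) auto
      also have "\<dots> = C3 * \<sigma> / (\<bar>y\<bar> - \<bar>\<mu>\<bar>)" unfolding t_def using s d by simp
      finally have "\<bar>y\<bar> * f1 \<gamma> t \<le> \<bar>y\<bar> * (C3 * \<sigma> / (\<bar>y\<bar> - \<bar>\<mu>\<bar>))" by (intro mult_left_mono) auto
      also have "\<dots> \<le> 2 * C3 * \<sigma>"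
      proof -
        have "\<bar>y\<bar> * (C3 * \<sigma>) \<le> (2 * C3 * \<sigma>) * (\<bar>y\<bar> - \<bar>\<mu>\<bar>)"
        proof -
          have "\<bar>y\<bar> \<le> 2 * (\<bar>y\<bar> - \<bar>\<mu>\<bar>)" using False s by (simp add: algebra_simps)
          then have "\<bar>y\<bar> * (C3 * \<sigma>) \<le> 2 * (\<bar>y\<bar> - \<bar>\<mu>\<bar>) * (C3 * \<sigma>)"
            using C3(1) s by (intro mult_right_mono) auto
          then show ?thesis by (simp add: algebra_simps)
        qed
        then show ?thesis using d by (simp add: divide_simps mult.commute)
      qed
      also have "\<dots> \<le> C4 * (\<sigma> + \<bar>\<mu>\<bar>)" unfolding C4_def using B0 C3(1) s
        by (simp add: algebra_simps add_nonneg_nonneg mult_nonneg_nonneg)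
      finally show ?thesis .
    qed
  qed
  show ?thesis using C40 main by blast
qed

theorem lemmaS3:
  fixes \<gamma> s :: real
  assumes "\<gamma> > 0" and "0 < s" and "s < 1"
  shows
   "(\<forall>z::real. set_integrable lborel {0<..} (\<lambda>u. normal_density 0 (sqrt u) z * Hmix \<gamma> u))
    \<and> (\<forall>z::real. 0 < f0 z \<and> f0 z = f0 \<bar>z\<bar> \<and> f0 z \<le> f0 0)
    \<and> (\<forall>z::real. 0 < f1 \<gamma> z \<and> f1 \<gamma> z = f1 \<gamma> \<bar>z\<bar> \<and> f1 \<gamma> z \<le> f1 \<gamma> 0)
    \<and> (\<forall>z::real. 0 < fmix \<gamma> s z \<and> fmix \<gamma> s z = fmix \<gamma> s \<bar>z\<bar> \<and> fmix \<gamma> s z \<le> fmix \<gamma> s 0)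
    \<and> continuous_on {0..} f0 \<and> continuous_on {0..} (f1 \<gamma>) \<and> continuous_on {0..} (fmix \<gamma> s)
    \<and> (\<forall>r1 r2::real. 0 \<le> r1 \<longrightarrow> r1 \<le> r2 \<longrightarrow>
         f0 r2 \<le> f0 r1 \<and> f1 \<gamma> r2 \<le> f1 \<gamma> r1 \<and> fmix \<gamma> s r2 \<le> fmix \<gamma> s r1)
    \<and> ((\<lambda>z::real. f0 z / f1 \<gamma> z) \<longlongrightarrow> 0) at_infinity
    \<and> bdd_above (range (\<lambda>z::real. f0 z / f1 \<gamma> z))
    \<and> (\<exists>C1>0. \<forall>z::real. z \<noteq> 0 \<longrightarrow>
         f1 \<gamma> z \<le> C1 / \<bar>z\<bar> * (1 + ln (1 + \<bar>z\<bar>^2)) powr (-1 - \<gamma>))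
    \<and> (\<exists>C2>0. \<forall>z::real. \<bar>z\<bar> \<ge> 1 \<longrightarrow>
         f1 \<gamma> z \<ge> C2 / \<bar>z\<bar> * (1 + ln (1 + \<bar>z\<bar>^2)) powr (-1 - \<gamma>))
    \<and> (\<exists>C3>0. \<forall>z::real. f1 \<gamma> z \<le> C3 / (1 + \<bar>z\<bar>))
    \<and> (\<exists>C4>0. \<forall>y \<mu> \<sigma> :: real. \<sigma> > 0 \<longrightarrow>
         \<bar>y\<bar> * f1 \<gamma> ((y - \<mu>) / \<sigma>) \<le> \<bar>y\<bar> * f1 \<gamma> ((\<bar>y\<bar> - \<bar>\<mu>\<bar>) / \<sigma>)
         \<and> \<bar>y\<bar> * f1 \<gamma> ((\<bar>y\<bar> - \<bar>\<mu>\<bar>) / \<sigma>) \<le> C4 * (\<sigma> + \<bar>\<mu>\<bar>))"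
proof -
  note g = assms(1)
  have fm: "fmix \<gamma> s = (\<lambda>z. (1 - s) * f0 z + s * f1 \<gamma> z)" by (rule ext) (simp add: fmix_def)
  have ggf: "\<And>z. (\<lambda>u. normal_density 0 (sqrt u) z * Hmix \<gamma> u) = gg \<gamma> z"
    by (rule ext) (simp add: gg_def)
  have s0: "0 < 1 - s" using assms by simp
  have P1: "\<forall>z::real. set_integrable lborel {0<..} (\<lambda>u. normal_density 0 (sqrt u) z * Hmix \<gamma> u)"
    unfolding ggf using gg_int[OF g] by blast
  have P2: "\<forall>z::real. 0 < f0 z \<and> f0 z = f0 \<bar>z\<bar> \<and> f0 z \<le> f0 0"
    using f0_pos f0_abs f0_mono by simp
  have P3: "\<forall>z::real. 0 < f1 \<gamma> z \<and> f1 \<gamma> z = f1 \<gamma> \<bar>z\<bar> \<and> f1 \<gamma> z \<le> f1 \<gamma> 0"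
    using f1_pos[OF g] f1_abs f1_mono[OF g] by simp
  have mono1: "fmix \<gamma> s z2 \<le> fmix \<gamma> s z1" if "\<bar>z1\<bar> \<le> \<bar>z2\<bar>" for z1 z2 :: real
  proof -
    have "(1 - s) * f0 z2 \<le> (1 - s) * f0 z1" using f0_mono[OF that] s0 by simp
    moreover have "s * f1 \<gamma> z2 \<le> s * f1 \<gamma> z1" using f1_mono[OF g that] assms by simp
    ultimately show ?thesis unfolding fmix_def by simp
  qed
  have P4: "\<forall>z::real. 0 < fmix \<gamma> s z \<and> fmix \<gamma> s z = fmix \<gamma> s \<bar>z\<bar> \<and> fmix \<gamma> s z \<le> fmix \<gamma> s 0"
  proof (intro allI conjI)
    fix z :: real
    show "0 < fmix \<gamma> s z" unfolding fmix_def using f0_pos[of z] f1_pos[OF g, of z] s0 assms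
      by (intro add_pos_pos mult_pos_pos) auto
    show "fmix \<gamma> s z = fmix \<gamma> s \<bar>z\<bar>" unfolding fmix_def f0_abs f1_abs ..
    show "fmix \<gamma> s z \<le> fmix \<gamma> s 0" by (rule mono1) simp
  qed
  have C0: "continuous_on {0..} f0" using f0_cont by (rule continuous_on_subset) simp
  have C1: "continuous_on {0..} (f1 \<gamma>)" using f1_cont[OF g] by (rule continuous_on_subset) simp
  have C2: "continuous_on {0..} (fmix \<gamma> s)" unfolding fm using C0 C1
    by (intro continuous_intros) auto
  have M: "\<forall>r1 r2::real. 0 \<le> r1 \<longrightarrow> r1 \<le> r2 \<longrightarrow>
         f0 r2 \<le> f0 r1 \<and> f1 \<gamma> r2 \<le> f1 \<gamma> r1 \<and> fmix \<gamma> s r2 \<le> fmix \<gamma> s r1"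
    by (auto intro!: f0_mono f1_mono[OF g] mono1)
  show ?thesis
    using P1 P2 P3 P4 C0 C1 C2 M ratio_lim[OF g] ratio_bdd[OF g] f1_upper[OF g] f1_lower[OF g]
      f1_C3[OF g] f1_C4[OF g]
    by blast
qed

end
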